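(* Let $w$ be a partial permutation and $i\in\mathbb Z$ such that $w(i)$, $w(i+1)$ and $w(i+2)$ are defined and exactly one of $\overline i,\overline{i+1}$ lies in $R(w)$. Then there exists a unique partial permutation $w'$ connected to $w$ by a Knuth move such that $R(w')$ contains the other of $\overline i,\overline{i+1}$ and not the first one.
   Context: Fix $n\ge1$; $\overline i=i+n\mathbb Z$. A partial permutation is an injection $w:U\to\mathbb Z$, where $U\subseteq\mathbb Z$ satisfies $x\in U\iff x+n\in U$ and $w(i+n)=w(i)+n$. Its right descent set is $R(w)=\{\overline i: w(i)>w(i+1)\}$ (over $i$ with $w(i),w(i+1)$ defined). Two partial permutations $w,w'$ are connected by a Knuth move at position $\overline j$ if $w'(t)=w(t+1)$ and $w'(t+1)=w(t)$ for all $t\equiv j\pmod n$, $w'(t)=w(t)$ for all $t\not\equiv j,j+1\pmod n$, and at least one of $w(j+2),w(j-1)$ lies numerically between $w(j)$ and $w(j+1)$. *)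

theory Defs
  imports Main
begin

text \<open>A partial permutation (with period n) is modelled as a partial map
  w :: int => int option; its domain U is dom w.  Residue classes i + nZ are
  represented by their canonical representatives i mod n.\<close>

definition partial_perm :: "int \<Rightarrow> (int \<Rightarrow> int option) \<Rightarrow> bool" where
  "partial_perm n w \<longleftrightarrow>
     (\<forall>x. x \<in> dom w \<longleftrightarrow> x + n \<in> dom w) \<and>
     inj_on w (dom w) \<and>
     (\<forall>i v. w i = Some v \<longrightarrow> w (i + n) = Some (v + n))"

definition right_descents :: "int \<Rightarrow> (int \<Rightarrow> int option) \<Rightarrow> int set" where
  "right_descents n w =
     {i mod n | i a b. w i = Some a \<and> w (i + 1) = Some b \<and> a > b}"

definition strictly_between :: "int \<Rightarrow> int \<Rightarrow> int \<Rightarrow> bool" where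
  "strictly_between a b c \<longleftrightarrow> min a b < c \<and> c < max a b"

definition knuth_move ::
  "int \<Rightarrow> (int \<Rightarrow> int option) \<Rightarrow> (int \<Rightarrow> int option) \<Rightarrow> int \<Rightarrow> bool" where
  "knuth_move n w w' j \<longleftrightarrow>
     (\<forall>t. t mod n = j mod n \<longrightarrow> w' t = w (t + 1) \<and> w' (t + 1) = w t) \<and>
     (\<forall>t. t mod n \<noteq> j mod n \<and> t mod n \<noteq> (j + 1) mod n \<longrightarrow> w' t = w t) \<and>
     (\<exists>a b. w j = Some a \<and> w (j + 1) = Some b \<and>
        ((\<exists>c. w (j + 2) = Some c \<and> strictly_between a b c) \<or>
         (\<exists>c. w (j - 1) = Some c \<and> strictly_between a b c)))"

definition knuth_connected ::
  "int \<Rightarrow> (int \<Rightarrow> int option) \<Rightarrow> (int \<Rightarrow> int option) \<Rightarrow> bool" where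
  "knuth_connected n w w' \<longleftrightarrow> (\<exists>j. knuth_move n w w' j)"

end

theory Submission
  imports Defs
begin


lemma per1:
  assumes "partial_perm n w"
  shows "w (t + n) = map_option (\<lambda>v. v + n) (w t)"
proof (cases "w t")
  case None
  then have "t \<notin> dom w" by auto
  then have "t + n \<notin> dom w" using assms unfolding partial_perm_def by blast
  then show ?thesis using None by auto
next
  case (Some v)
  then show ?thesis using assms unfolding partial_perm_def by auto
qed

lemma per_nat:
  assumes "partial_perm n w"
  shows "w (t + int k * n) = map_option (\<lambda>v. v + int k * n) (w t)"
proof (induction k)
  case 0 then show ?case by (simp add: option.map_ident)
next
  case (Suc k)
  have "w (t + int (Suc k) * n) = w ((t + int k * n) + n)" by (simp add: algebra_simps)
  also have "\<dots> = map_option (\<lambda>v. v + n) (w (t + int k * n))" by (rule per1[OF assms])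
  also have "\<dots> = map_option (\<lambda>v. v + int (Suc k) * n) (w t)"
    using Suc by (simp add: option.map_comp o_def algebra_simps)
  finally show ?case .
qed

lemma per_int:
  assumes "partial_perm n w"
  shows "w (t + k * n) = map_option (\<lambda>v. v + k * n) (w t)"
proof (cases "k \<ge> 0")
  case True
  then obtain m where "k = int m" using nonneg_int_cases by blast
  then show ?thesis using per_nat[OF assms] by simp
next
  case False
  define m where "m = nat (-k)"
  have m: "k = - int m" using False m_def by simp
  have "w t = w ((t + k*n) + int m * n)" using m by (simp add: algebra_simps)
  also have "\<dots> = map_option (\<lambda>v. v + int m * n) (w (t + k*n))" by (rule per_nat[OF assms])
  finally have "w t = map_option (\<lambda>v. v + int m * n) (w (t + k*n))" .
  then have "map_option (\<lambda>v. v + k * n) (w t) = w (t + k*n)"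
    using m by (cases "w (t + k*n)") (auto simp: algebra_simps)
  then show ?thesis by simp
qed

lemma permod:
  assumes "partial_perm n w" "t' mod n = t mod n"
  shows "w t' = map_option (\<lambda>v. v + (t' - t)) (w t)"
proof -
  have "n dvd (t' - t)" using assms(2) by (simp add: mod_eq_dvd_iff)
  then obtain k where k: "t' - t = k * n" by (metis dvd_def mult.commute)
  have "t' = t + k * n" using k by simp
  then have "w t' = w (t + k * n)" by simp
  then show ?thesis using per_int[OF assms(1), of t k] k by simp
qed

lemma desc_iff:
  assumes "partial_perm n w"
  shows "(i mod n \<in> right_descents n w) \<longleftrightarrow> (\<exists>a b. w i = Some a \<and> w (i+1) = Some b \<and> a > b)"
proof
  assume "i mod n \<in> right_descents n w"
  then obtain k a b where k: "i mod n = k mod n" "w k = Some a" "w (k+1) = Some b" "a > b"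
    unfolding right_descents_def by blast
  have wi: "w i = Some (a + (i - k))" using permod[OF assms, of i k] k by simp
  have "(i+1) mod n = (k+1) mod n" using k(1) by (metis mod_add_left_eq)
  then have "w (i+1) = Some (b + (i - k))" using permod[OF assms, of "i+1" "k+1"] k by simp
  moreover
  ultimately show "\<exists>a b. w i = Some a \<and> w (i+1) = Some b \<and> a > b" using k wi by auto
next
  assume "\<exists>a b. w i = Some a \<and> w (i+1) = Some b \<and> a > b"
  then show "i mod n \<in> right_descents n w" unfolding right_descents_def by blast
qed

definition sig :: "int \<Rightarrow> int \<Rightarrow> int \<Rightarrow> int" where
  "sig n j t = (if t mod n = j mod n then t+1 else if t mod n = (j+1) mod n then t-1 else t)"

lemma sig_shift: "sig n j (t + n) = sig n j t + n"
  unfolding sig_def by simp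

lemma mod_shift: "((x::int) + c) mod n = (y + c) mod n \<longleftrightarrow> x mod n = y mod n"
  by (simp add: mod_eq_dvd_iff)

lemma sig_invol:
  assumes "n \<ge> 2"
  shows "sig n j (sig n j t) = t"
proof -
  have ne: "(x+1) mod n \<noteq> x mod n" for x :: int
  proof
    assume "(x+1) mod n = x mod n"
    then have "n dvd 1" by (simp add: mod_eq_dvd_iff)
    then show False using assms using assms by (auto simp: zdvd1_eq)
  qed
  consider (A) "t mod n = j mod n" | (B) "t mod n \<noteq> j mod n" "t mod n = (j+1) mod n"
    | (C) "t mod n \<noteq> j mod n" "t mod n \<noteq> (j+1) mod n" by blast
  then show ?thesis
  proof cases
    case A
    then have e: "(t+1) mod n = (j+1) mod n" using mod_shift by blast
    then have "(t+1) mod n \<noteq> j mod n" using ne[of j] by simp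
    then show ?thesis using A e unfolding sig_def by simp
  next
    case B
    have e: "(t-1) mod n = j mod n" using B(2) mod_shift[of "t-1" 1 n j] by simp
    then show ?thesis using B unfolding sig_def by simp
  next
    case C then show ?thesis unfolding sig_def by simp
  qed
qed

lemma swap_pp:
  assumes "n \<ge> 2" "partial_perm n w"
  shows "partial_perm n (w \<circ> sig n j)"
proof -
  have inj: "inj (sig n j)" by (metis inj_on_inverseI sig_invol[OF assms(1)])
  have d: "x \<in> dom (w \<circ> sig n j) \<longleftrightarrow> sig n j x \<in> dom w" for x by auto
  have 1: "\<forall>x. x \<in> dom (w \<circ> sig n j) \<longleftrightarrow> x + n \<in> dom (w \<circ> sig n j)"
    using assms(2) unfolding d sig_shift partial_perm_def by blast
  have 2: "inj_on (w \<circ> sig n j) (dom (w \<circ> sig n j))"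
  proof (rule inj_onI)
    fix x y assume "x \<in> dom (w \<circ> sig n j)" "y \<in> dom (w \<circ> sig n j)" "(w \<circ> sig n j) x = (w \<circ> sig n j) y"
    then have "sig n j x = sig n j y" using assms(2) unfolding partial_perm_def d
      by (auto dest: inj_onD)
    then show "x = y" using inj by (auto dest: injD)
  qed
  have 3: "\<forall>i v. (w \<circ> sig n j) i = Some v \<longrightarrow> (w \<circ> sig n j) (i + n) = Some (v + n)"
    using assms(2) unfolding partial_perm_def by (simp add: sig_shift)
  show ?thesis using 1 2 3 unfolding partial_perm_def by blast
qed

definition kc :: "int \<Rightarrow> (int \<Rightarrow> int option) \<Rightarrow> int \<Rightarrow> bool" where
  "kc n w j \<longleftrightarrow> (\<exists>a b. w j = Some a \<and> w (j + 1) = Some b \<and>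
        ((\<exists>c. w (j + 2) = Some c \<and> strictly_between a b c) \<or>
         (\<exists>c. w (j - 1) = Some c \<and> strictly_between a b c)))"

lemma ne1:
  assumes "n \<ge> 2" shows "((x::int)+1) mod n \<noteq> x mod n"
proof
  assume "(x+1) mod n = x mod n"
  then have "n dvd 1" by (simp add: mod_eq_dvd_iff)
  then show False using assms by (auto simp: zdvd1_eq)
qed

lemma knuth_eq:
  assumes "n \<ge> 2" "knuth_move n w w' j"
  shows "w' = w \<circ> sig n j \<and> kc n w j"
proof -
  have "w' t = w (sig n j t)" for t
  proof -
    consider (A) "t mod n = j mod n" | (B) "t mod n \<noteq> j mod n" "t mod n = (j+1) mod n"
      | (C) "t mod n \<noteq> j mod n" "t mod n \<noteq> (j+1) mod n" by blast
    then show ?thesis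
    proof cases
      case A then show ?thesis using assms(2) unfolding knuth_move_def sig_def by simp
    next
      case B
      have e: "(t-1) mod n = j mod n" using B(2) mod_shift[of "t-1" 1 n j] by simp
      then have "w' (t - 1 + 1) = w (t-1)" using assms(2) unfolding knuth_move_def by blast
      then show ?thesis using B unfolding sig_def by simp
    next
      case C then show ?thesis using assms(2) unfolding knuth_move_def sig_def by simp
    qed
  qed
  then show ?thesis using assms(2) unfolding knuth_move_def kc_def by auto
qed

lemma knuth_swap:
  assumes "n \<ge> 2" "kc n w j"
  shows "knuth_move n w (w \<circ> sig n j) j"
proof -
  have 1: "\<forall>t. t mod n = j mod n \<longrightarrow> (w \<circ> sig n j) t = w (t + 1) \<and> (w \<circ> sig n j) (t + 1) = w t"
  proof (intro allI impI)
    fix t assume A: "t mod n = j mod n"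
    then have e: "(t+1) mod n = (j+1) mod n" using mod_shift by blast
    then have "(t+1) mod n \<noteq> j mod n" using ne1[OF assms(1), of j] by simp
    then show "(w \<circ> sig n j) t = w (t + 1) \<and> (w \<circ> sig n j) (t + 1) = w t"
      using A e unfolding sig_def by simp
  qed
  have 2: "\<forall>t. t mod n \<noteq> j mod n \<and> t mod n \<noteq> (j + 1) mod n \<longrightarrow> (w \<circ> sig n j) t = w t"
    unfolding sig_def by simp
  show ?thesis using 1 2 assms(2) unfolding knuth_move_def kc_def by blast
qed

lemma sig_cong: 
  assumes "j mod n = j' mod n" shows "sig n j = sig n j'"
proof -
  have "(j+1) mod n = (j'+1) mod n" using assms mod_shift by blast
  then show ?thesis using assms unfolding sig_def by (intro ext) simp
qed

lemma kc_cong: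
  assumes "partial_perm n w" "j' mod n = j mod n" "kc n w j"
  shows "kc n w j'"
proof -
  have e: "w (j' + x) = map_option (\<lambda>v. v + (j' - j)) (w (j + x))" for x
  proof -
    have "(j' + x) mod n = (j + x) mod n" using assms(2) mod_shift[of j' x n j] by (simp add: add.commute)
    from permod[OF assms(1) this] show ?thesis by simp
  qed
  have sb: "strictly_between (a + k) (b + k) (c + k) \<longleftrightarrow> strictly_between a b c" for a b c k :: int
    unfolding strictly_between_def by auto
  from assms(3) obtain a b where ab: "w j = Some a" "w (j+1) = Some b"
    "(\<exists>c. w (j + 2) = Some c \<and> strictly_between a b c) \<or> (\<exists>c. w (j - 1) = Some c \<and> strictly_between a b c)"
    unfolding kc_def by blast
  have "w j' = Some (a + (j'-j))" using e[of 0] ab by simp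
  moreover have "w (j'+1) = Some (b + (j'-j))" using e[of 1] ab by simp
  moreover have "(\<exists>c. w (j' + 2) = Some c \<and> strictly_between (a + (j'-j)) (b + (j'-j)) c) \<or>
      (\<exists>c. w (j' - 1) = Some c \<and> strictly_between (a + (j'-j)) (b + (j'-j)) c)"
    using ab(3) e[of 2] e[of "-1"] sb by fastforce
  ultimately show ?thesis unfolding kc_def by blast
qed

lemma dv3:
  assumes "n \<ge> 2" "-2*n < x" "x < 2*n"
  shows "n dvd (x::int) \<longleftrightarrow> x = -n \<or> x = 0 \<or> x = n"
proof
  assume "n dvd x"
  then obtain k where k: "x = n * k" by blast
  have "-2 < k"
  proof (rule ccontr)
    assume "\<not> -2 < k"
    then have "n * k \<le> n * (-2)" using assms(1) by (intro mult_left_mono) auto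
    then show False using assms k by simp
  qed
  moreover have "k < 2"
  proof (rule ccontr)
    assume "\<not> k < 2"
    then have "n * 2 \<le> n * k" using assms(1) by (intro mult_left_mono) auto
    then show False using assms k by simp
  qed
  ultimately have "k = -1 \<or> k = 0 \<or> k = 1" by auto
  then show "x = -n \<or> x = 0 \<or> x = n" using k by auto
qed auto

lemma modeq_d:
  assumes "n \<ge> 2" "0 \<le> d" "d < n" "-1 \<le> e" "e \<le> 2"
  shows "(i + e) mod n = ((i::int) + d) mod n \<longleftrightarrow> (e - d = -n \<or> e - d = 0 \<or> e - d = n)"
proof -
  have "(i + e) mod n = (i + d) mod n \<longleftrightarrow> n dvd (e - d)" by (simp add: mod_eq_dvd_iff)
  also have "\<dots> \<longleftrightarrow> (e - d = -n \<or> e - d = 0 \<or> e - d = n)" using assms by (intro dv3) auto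
  finally show ?thesis .
qed

lemma sig0:
  assumes "n \<ge> 2" "0 \<le> d" "d < n"
  shows "sig n (i+d) i = (if d = 0 then i+1 else if d = n-1 then i-1 else i)"
proof -
  have c1: "i mod n = (i+d) mod n \<longleftrightarrow> d = 0" using modeq_d[OF assms, of 0 i] assms by auto
  have "(i + -1) mod n = (i+d) mod n \<longleftrightarrow> d = n - 1" using modeq_d[OF assms, of "-1" i] assms by auto
  then have c2: "i mod n = (i+d+1) mod n \<longleftrightarrow> d = n-1" using mod_shift[of "i-1" 1 n "i+d"] by simp
  show ?thesis unfolding sig_def c1 c2 by simp
qed

lemma sig1:
  assumes "n \<ge> 2" "0 \<le> d" "d < n"
  shows "sig n (i+d) (i+1) = (if d = 1 then i+2 else if d = 0 then i else i+1)"
proof -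
  have c1: "(i+1) mod n = (i+d) mod n \<longleftrightarrow> d = 1" using modeq_d[OF assms, of 1 i] assms by auto
  have "(i + 0) mod n = (i+d) mod n \<longleftrightarrow> d = 0" using modeq_d[OF assms, of 0 i] assms by auto
  then have c2: "(i+1) mod n = (i+d+1) mod n \<longleftrightarrow> d = 0" using mod_shift[of "i" 1 n "i+d"] by simp
  show ?thesis unfolding sig_def c1 c2 by simp
qed

lemma sig2:
  assumes "n \<ge> 2" "0 \<le> d" "d < n"
  shows "sig n (i+d) (i+2) = (if d = 2 \<or> (n = 2 \<and> d = 0) then i+3 else if d = 1 then i+1 else i+2)"
proof -
  have c1: "(i+2) mod n = (i+d) mod n \<longleftrightarrow> (d = 2 \<or> (n = 2 \<and> d = 0))" using modeq_d[OF assms, of 2 i] assms by auto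
  have "(i + 1) mod n = (i+d) mod n \<longleftrightarrow> d = 1" using modeq_d[OF assms, of 1 i] assms by auto
  then have c2: "(i+2) mod n = (i+d+1) mod n \<longleftrightarrow> d = 1" using mod_shift[of "i+1" 1 n "i+d"] by (simp add: algebra_simps)
  show ?thesis unfolding sig_def c1 c2 by simp
qed

lemma kcI1: "w j = Some x \<Longrightarrow> w (j+1) = Some y \<Longrightarrow> w (j+2) = Some z \<Longrightarrow> strictly_between x y z \<Longrightarrow> kc n w j"
  unfolding kc_def by blast
lemma kcI2: "w j = Some x \<Longrightarrow> w (j+1) = Some y \<Longrightarrow> w (j-1) = Some z \<Longrightarrow> strictly_between x y z \<Longrightarrow> kc n w j"
  unfolding kc_def by blast

lemma descW:
  assumes "n \<ge> 2" "partial_perm n w"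
  shows "i mod n \<in> right_descents n (w \<circ> sig n j) \<longleftrightarrow>
    (\<exists>x y. w (sig n j i) = Some x \<and> w (sig n j (i+1)) = Some y \<and> y < x)"
  using desc_iff[OF swap_pp[OF assms]] by simp

lemma descW1:
  assumes "n \<ge> 2" "partial_perm n w"
  shows "(i+1) mod n \<in> right_descents n (w \<circ> sig n j) \<longleftrightarrow>
    (\<exists>x y. w (sig n j (i+1)) = Some x \<and> w (sig n j (i+2)) = Some y \<and> y < x)"
proof -
  have "i + 1 + 1 = i + 2" by simp
  then show ?thesis using descW[OF assms, of "i+1" j] by metis
qed

lemma exu:
  assumes n2: "n \<ge> 2" and pp: "partial_perm n w" and k0: "kc n w (i+d0)"
    and G0: "G (w \<circ> sig n (i+d0))"
    and U: "\<And>d. 0 \<le> d \<Longrightarrow> d < n \<Longrightarrow> kc n w (i+d) \<Longrightarrow> G (w \<circ> sig n (i+d)) \<Longrightarrow> d = d0"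
  shows "\<exists>!w'. partial_perm n w' \<and> knuth_connected n w w' \<and> G w'"
proof (rule ex1I[of _ "w \<circ> sig n (i+d0)"])
  show "partial_perm n (w \<circ> sig n (i+d0)) \<and> knuth_connected n w (w \<circ> sig n (i+d0)) \<and> G (w \<circ> sig n (i+d0))"
    using swap_pp[OF n2 pp] knuth_swap[OF n2 k0] G0 unfolding knuth_connected_def by blast
next
  fix y assume y: "partial_perm n y \<and> knuth_connected n w y \<and> G y"
  then obtain j where "knuth_move n w y j" unfolding knuth_connected_def by blast
  from knuth_eq[OF n2 this] have yj: "y = w \<circ> sig n j" and kj: "kc n w j" by auto
  define d where "d = (j - i) mod n"
  have dr: "0 \<le> d" "d < n" using n2 unfolding d_def by auto
  have jm: "(i + d) mod n = j mod n" unfolding d_def by (simp add: mod_add_right_eq)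
  have sj: "sig n j = sig n (i+d)" using sig_cong jm by metis
  have kd: "kc n w (i+d)" using kc_cong[OF pp jm kj] .
  have "G (w \<circ> sig n (i+d))" using y yj sj by simp
  then have "d = d0" using U dr kd by blast
  then show "y = w \<circ> sig n (i+d0)" using yj sj by simp
qed

theorem proposition3p8:
  fixes n i :: int and w :: "int \<Rightarrow> int option"
  assumes "n \<ge> 1"
    and "partial_perm n w"
    and "i \<in> dom w" and "i + 1 \<in> dom w" and "i + 2 \<in> dom w"
    and "(i mod n \<in> right_descents n w) \<noteq> ((i + 1) mod n \<in> right_descents n w)"
  shows "(i mod n \<in> right_descents n w \<longrightarrow>
            (\<exists>!w'. partial_perm n w' \<and> knuth_connected n w w' \<and>
                 (i + 1) mod n \<in> right_descents n w' \<and> i mod n \<notin> right_descents n w')) \<and>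
         ((i + 1) mod n \<in> right_descents n w \<longrightarrow>
            (\<exists>!w'. partial_perm n w' \<and> knuth_connected n w w' \<and>
                 i mod n \<in> right_descents n w' \<and> (i + 1) mod n \<notin> right_descents n w'))"
proof -
  have n2: "n \<ge> 2"
  proof (rule ccontr)
    assume "\<not> n \<ge> 2" then have "n = 1" using assms(1) by simp
    then show False using assms(6) by simp
  qed
  note pp = assms(2)
  obtain a where a: "w i = Some a" using assms(3) by auto
  obtain b where b: "w (i+1) = Some b" using assms(4) by auto
  obtain c where c: "w (i+2) = Some c" using assms(5) by auto
  have injw: "inj_on w (dom w)" using pp unfolding partial_perm_def by blast
  have ac: "a \<noteq> c"
  proof
    assume "a = c" then have "w i = w (i+2)" using a c by simp
    from inj_onD[OF injw this assms(3) assms(5)] have "i = i + 2" .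
    then show False by simp
  qed
  have bc: "b \<noteq> c"
  proof
    assume "b = c" then have "w (i+1) = w (i+2)" using b c by simp
    from inj_onD[OF injw this assms(4) assms(5)] have "i + 1 = i + 2" .
    then show False by simp
  qed
  have ab: "a \<noteq> b"
  proof
    assume "a = b" then have "w i = w (i+1)" using a b by simp
    from inj_onD[OF injw this assms(3) assms(4)] have "i = i + 1" .
    then show False by simp
  qed
  have RA: "i mod n \<in> right_descents n w \<longleftrightarrow> a > b" using desc_iff[OF pp, of i] a b by simp
  have "i + 1 + 1 = i + 2" by simp
  then have RB: "(i+1) mod n \<in> right_descents n w \<longleftrightarrow> b > c" using desc_iff[OF pp, of "i+1"] b c by (simp add: add.commute)
  have v2: "c = a + 2 \<and> w (i+3) = Some (b+2) \<and> w (i-1) = Some (b-2)" if "n = 2"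
  proof -
    have "(i+2) mod n = i mod n" "(i+3) mod n = (i+1) mod n" "(i-1) mod n = (i+1) mod n"
      using that by (simp_all add: mod_eq_dvd_iff)
    then show ?thesis using permod[OF pp, of "i+2" i] permod[OF pp, of "i+3" "i+1"]
      permod[OF pp, of "i-1" "i+1"] a b c by simp
  qed
  have v3: "w (i+3) = Some (a+3) \<and> w (i-1) = Some (c-3)" if "n = 3"
  proof -
    have "(i+3) mod n = i mod n" "(i-1) mod n = (i+2) mod n"
      using that by (simp_all add: mod_eq_dvd_iff)
    then show ?thesis using permod[OF pp, of "i+3" i] permod[OF pp, of "i-1" "i+2"] a c by simp
  qed
  have sbd: "strictly_between x y z \<longleftrightarrow> min x y < z \<and> z < max x y" for x y z
    by (simp add: strictly_between_def)
  show ?thesis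
  proof (intro conjI impI)
    assume "i mod n \<in> right_descents n w"
    then have AB: "a > b" "b < c" using RA RB assms(6) ab bc by auto
    show "\<exists>!w'. partial_perm n w' \<and> knuth_connected n w w' \<and>
                 (i + 1) mod n \<in> right_descents n w' \<and> i mod n \<notin> right_descents n w'"
    proof (rule exu[OF n2 pp, of i "if a < c then 1 else 0"])
      show "kc n w (i + (if a < c then 1 else 0))"
      proof (cases "a < c")
        case True
        have e: "(if a < c then 1 else 0) = (1::int)" using True by simp
        have h: "w (i+1+1) = Some c" "w (i+1-1) = Some a" using a c by (simp_all add: add.commute)
        have "kc n w (i+1)" using kcI2[where j="i+1" and x=b and y=c and z=a and n=n and w=w] h b True AB
          by (simp add: strictly_between_def)
        then show ?thesis unfolding e .
      next
        case False
        have e: "(if a < c then 1 else 0) = (0::int)" using False by simp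
        have "kc n w i" using kcI1[where j=i and x=a and y=b and z=c and n=n and w=w] a c b False AB ac by (simp add: strictly_between_def)
        then show ?thesis unfolding e by simp
      qed
      show "(i + 1) mod n \<in> right_descents n (w \<circ> sig n (i + (if a < c then 1 else 0))) \<and>
        i mod n \<notin> right_descents n (w \<circ> sig n (i + (if a < c then 1 else 0)))"
      proof (cases "a < c")
        case True
        have e: "(if a < c then 1 else 0) = (1::int)" using True by simp
        have s: "sig n (i+1) i = (if n = 2 then i-1 else i)" "sig n (i+1) (i+1) = i+2" "sig n (i+1) (i+2) = i+1"
          using sig0[OF n2, of 1 i] sig1[OF n2, of 1 i] sig2[OF n2, of 1 i] n2 by auto
        show ?thesis unfolding e descW1[OF n2 pp] unfolding descW[OF n2 pp] s using a b c v2 AB True by auto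
      next
        case False
        have e: "(if a < c then 1 else 0) = (0::int)" using False by simp
        have n2': "n \<noteq> 2" using v2 False by auto
        have s: "sig n (i+0) i = i+1" "sig n (i+0) (i+1) = i" "sig n (i+0) (i+2) = i+2"
          using sig0[OF n2, of 0 i] sig1[OF n2, of 0 i] sig2[OF n2, of 0 i] n2 n2' by auto
        show ?thesis unfolding e descW1[OF n2 pp] unfolding descW[OF n2 pp] s using a b c AB False ac by auto
      qed
    next
      fix d :: int assume d: "0 \<le> d" "d < n" and k: "kc n w (i + d)"
        and g: "(i + 1) mod n \<in> right_descents n (w \<circ> sig n (i + d)) \<and>
        i mod n \<notin> right_descents n (w \<circ> sig n (i + d))"
      show "d = (if a < c then 1 else 0)"
      proof -
      have g1: "\<exists>x y. w (sig n (i+d) (i+1)) = Some x \<and> w (sig n (i+d) (i+2)) = Some y \<and> y < x"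
        using g descW1[OF n2 pp] by blast
      have g2: "\<not>(\<exists>x y. w (sig n (i+d) i) = Some x \<and> w (sig n (i+d) (i+1)) = Some y \<and> y < x)"
        using g descW[OF n2 pp] by blast
      note s0 = sig0[OF n2 d, of i] and s1 = sig1[OF n2 d, of i] and s2 = sig2[OF n2 d, of i]
      consider (z) "d = 0" | (o) "d = 1" | (r) "d \<noteq> 0" "d \<noteq> 1" by blast
      then show ?thesis
      proof cases
        case z
        show ?thesis
        proof (rule ccontr)
          assume ne: "d \<noteq> (if a<c then 1 else 0)"
          then have ac': "a < c" using z by (auto split: if_splits)
          show False
          proof (cases "n = 2")
            case True
            have "kc n w i" using k z by simp
            then show False unfolding kc_def using v2[OF True] a b c AB by (auto simp: strictly_between_def)
          next
            case False
            then show False using g1 s1 s2 z a c ac' by auto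
          qed
        qed
      next
        case o
        have "a < c"
        proof (cases "n=2")
          case True then show ?thesis using v2 by simp
        next
          case False
          then have "sig n (i+d) i = i" using s0 o n2 by auto
          then show ?thesis using g2 s1 o a c ac by auto
        qed
        then show ?thesis using o by simp
      next
        case r
        have x: "sig n (i+d) (i+1) = i+1" using s1 r by simp
        have "sig n (i+d) i \<noteq> i"
        proof
          assume "sig n (i+d) i = i" then show False using g2 x a b AB by auto
        qed
        then have dn: "d = n-1" using s0 r by (auto split: if_splits)
        have "sig n (i+d) (i+2) \<noteq> i+2"
        proof
          assume "sig n (i+d) (i+2) = i+2" then show False using g1 x b c AB by auto
        qed
        then have d2: "d = 2" using s2 r by (auto split: if_splits)
        then have n3: "n = 3" using dn by simp
        have "sig n (i+d) (i+2) = i+3" using s2 d2 by simp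
        then show ?thesis using g1 x v3[OF n3] b AB by auto
      qed
      qed
    qed
  next
    assume "(i+1) mod n \<in> right_descents n w"
    then have AB: "a < b" "b > c" using RA RB assms(6) ab bc by auto
    show "\<exists>!w'. partial_perm n w' \<and> knuth_connected n w w' \<and>
                 i mod n \<in> right_descents n w' \<and> (i + 1) mod n \<notin> right_descents n w'"
    proof (rule exu[OF n2 pp, of i "if a < c then 0 else 1"])
      show "kc n w (i + (if a < c then 0 else 1))"
      proof (cases "a < c")
        case True
        have e: "(if a < c then 0 else 1) = (0::int)" using True by simp
        have "kc n w i" using kcI1[where j=i and x=a and y=b and z=c and n=n and w=w] a c b True AB by (simp add: strictly_between_def)
        then show ?thesis unfolding e by simp
      next
        case False
        have e: "(if a < c then 0 else 1) = (1::int)" using False by simp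
        have h: "w (i+1+1) = Some c" "w (i+1-1) = Some a" using a c by (simp_all add: add.commute)
        have "kc n w (i+1)" using kcI2[where j="i+1" and x=b and y=c and z=a and n=n and w=w] h b False AB ac
          by (simp add: strictly_between_def)
        then show ?thesis unfolding e .
      qed
      show "i mod n \<in> right_descents n (w \<circ> sig n (i + (if a < c then 0 else 1))) \<and>
        (i + 1) mod n \<notin> right_descents n (w \<circ> sig n (i + (if a < c then 0 else 1)))"
      proof (cases "a < c")
        case True
        have e: "(if a < c then 0 else 1) = (0::int)" using True by simp
        have s: "sig n (i+0) i = i+1" "sig n (i+0) (i+1) = i" "sig n (i+0) (i+2) = (if n = 2 then i+3 else i+2)"
          using sig0[OF n2, of 0 i] sig1[OF n2, of 0 i] sig2[OF n2, of 0 i] n2 by auto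
        show ?thesis unfolding e descW1[OF n2 pp] unfolding descW[OF n2 pp] s using a b c v2 AB True by auto
      next
        case False
        have e: "(if a < c then 0 else 1) = (1::int)" using False by simp
        have n2': "n \<noteq> 2" using v2 False by auto
        have s: "sig n (i+1) i = i" "sig n (i+1) (i+1) = i+2" "sig n (i+1) (i+2) = i+1"
          using sig0[OF n2, of 1 i] sig1[OF n2, of 1 i] sig2[OF n2, of 1 i] n2 n2' by auto
        show ?thesis unfolding e descW1[OF n2 pp] unfolding descW[OF n2 pp] s using a b c AB False ac by auto
      qed
    next
      fix d :: int assume d: "0 \<le> d" "d < n" and k: "kc n w (i + d)"
        and g: "i mod n \<in> right_descents n (w \<circ> sig n (i + d)) \<and>
        (i + 1) mod n \<notin> right_descents n (w \<circ> sig n (i + d))"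
      show "d = (if a < c then 0 else 1)"
      proof -
      have g1: "\<exists>x y. w (sig n (i+d) i) = Some x \<and> w (sig n (i+d) (i+1)) = Some y \<and> y < x"
        using g descW[OF n2 pp] by blast
      have g2: "\<not>(\<exists>x y. w (sig n (i+d) (i+1)) = Some x \<and> w (sig n (i+d) (i+2)) = Some y \<and> y < x)"
        using g descW1[OF n2 pp] by blast
      note s0 = sig0[OF n2 d, of i] and s1 = sig1[OF n2 d, of i] and s2 = sig2[OF n2 d, of i]
      consider (z) "d = 0" | (o) "d = 1" | (r) "d \<noteq> 0" "d \<noteq> 1" by blast
      then show ?thesis
      proof cases
        case z
        have "a < c"
        proof (cases "n=2")
          case True then show ?thesis using v2 by simp
        next
          case False
          then have "sig n (i+d) (i+2) = i+2" using s2 z by auto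
          then show ?thesis using g2 s1 z a c ac by auto
        qed
        then show ?thesis using z by simp
      next
        case o
        show ?thesis
        proof (rule ccontr)
          assume ne: "d \<noteq> (if a<c then 0 else 1)"
          then have ac': "a < c" using o by (auto split: if_splits)
          show False
          proof (cases "n = 2")
            case True
            have "kc n w (i+1)" using k o by simp
            moreover have "w (i+1+1) = Some (a+2)" "w (i+1+2) = Some (b+2)" "w (i+1-1) = Some a"
              using v2[OF True] a c by (simp_all add: add.commute)
            ultimately show False unfolding kc_def using b AB by (auto simp: strictly_between_def)
          next
            case False
            then have "sig n (i+d) i = i" using s0 o n2 by auto
            then show False using g1 s1 o a c ac' by auto
          qed
        qed
      next
        case r
        have x: "sig n (i+d) (i+1) = i+1" using s1 r by simp
        have "sig n (i+d) i \<noteq> i"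
        proof
          assume "sig n (i+d) i = i" then show False using g1 x a b AB by auto
        qed
        then have dn: "d = n-1" using s0 r by (auto split: if_splits)
        have "sig n (i+d) (i+2) \<noteq> i+2"
        proof
          assume "sig n (i+d) (i+2) = i+2" then show False using g2 x b c AB by auto
        qed
        then have d2: "d = 2" using s2 r by (auto split: if_splits)
        then have n3: "n = 3" using dn by simp
        have "sig n (i+d) i = i - 1" using s0 dn r by simp
        then show ?thesis using g1 x v3[OF n3] b c AB by auto
      qed
      qed
    qed
  qed
qed

end
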